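(* Let $\mathcal{H}=\bigotimes_{i=1}^n\mathbb{C}^{d_i}$ and let $|\psi\rangle,|\phi\rangle\in\mathcal{H}$ be fully entangled pure states. If there exists a map $\Lambda\in\mathrm{LOCC}_{\mathbb{N}}$ with $\Lambda(|\psi\rangle\langle\psi|)=|\phi\rangle\langle\phi|$, then there exists a map $\Lambda'\in\mathrm{SEP}_1$ with $\Lambda'(|\psi\rangle\langle\psi|)=|\phi\rangle\langle\phi|$.
   Context: A pure state in $\bigotimes_{i=1}^n\mathbb{C}^{d_i}$ is fully entangled if each single-party reduced density matrix $\rho_i$ has rank $d_i$. A CPTP map $\Lambda$ on $\mathcal{B}(\mathcal{H})$ is in $\mathrm{SEP}_1$ if it admits a Kraus decomposition $\Lambda(X)=\sum_iK_iXK_i^\dagger$, $\sum_iK_i^\dagger K_i=\mathbb{1}$, with every $K_i=\bigotimes_{j=1}^nK_i^{(j)}$ and $K_i^{(j)}\in GL(d_j,\mathbb{C})$ for all $i,j$. A CPTP map is in $\mathrm{LOCC}_{\mathbb{N}}$ (with $m$ rounds) if it admits a Kraus decomposition with Kraus operators indexed by multi-indices $i=(i_1,\dots,i_m)$, $K_{(i_1\cdots i_m)}=L_{i_m}(\{i_j\}_{j<m})\cdots L_{i_1}$, where each $L_{i_k}(\{i_j\}_{j<k})=U^{(1)}_{i_k}\otimes\cdots\otimes U^{(s_k-1)}_{i_k}\otimes P^{(s_k)}_{i_k}\otimes U^{(s_k+1)}_{i_k}\otimes\cdots\otimes U^{(n)}_{i_k}$ (all factors depending on $\{i_j\}_{j<k}$),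 the $U$'s are unitary, the party $s_k=s_k(\{i_j\}_{j<k})$, and $\sum_{i_k}(P^{(s_k)}_{i_k})^\dagger P^{(s_k)}_{i_k}=\mathbb{1}$ for every value of $\{i_j\}_{j<k}$; i.e. in each round one party performs a generalized measurement, broadcasts the outcome, and the other parties apply unitaries depending on all previous outcomes. *)

theory Defs
  imports Complex_Main "Jordan_Normal_Form.DL_Rank"
begin

(* Multi-party Hilbert space  H = C^{d 0} \<otimes> ... \<otimes> C^{d (n-1)}.
   Computational basis vectors are indexed by multi-indices x :: nat \<Rightarrow> nat
   with x j < d j for j < n and x j = 0 for j \<ge> n. *)
type_synonym idx = "nat \<Rightarrow> nat"
type_synonym op = "idx \<Rightarrow> idx \<Rightarrow> complex"     (* operator on H, by matrix entries *)
type_synonym lop = "nat \<Rightarrow> nat \<Rightarrow> complex"    (* local operator on C^{d_j}, entries for a,b < d_j *)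

definition basis_idx :: "nat \<Rightarrow> (nat \<Rightarrow> nat) \<Rightarrow> idx set" where
  "basis_idx n d = {x. (\<forall>j<n. x j < d j) \<and> (\<forall>j. n \<le> j \<longrightarrow> x j = 0)}"

definition tens :: "nat \<Rightarrow> (nat \<Rightarrow> lop) \<Rightarrow> op" where
  "tens n A = (\<lambda>x y. \<Prod>j<n. A j (x j) (y j))"

definition op_mult :: "idx set \<Rightarrow> op \<Rightarrow> op \<Rightarrow> op" where
  "op_mult I A B = (\<lambda>x y. \<Sum>z\<in>I. A x z * B z y)"

definition op_id :: op where
  "op_id = (\<lambda>x y. if x = y then 1 else 0)"

definition dens :: "idx set \<Rightarrow> (idx \<Rightarrow> complex) \<Rightarrow> op" where
  "dens I \<psi> = (\<lambda>x y. if x \<in> I \<and> y \<in> I then \<psi> x * cnj (\<psi> y) else 0)"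

definition pure_state :: "idx set \<Rightarrow> (idx \<Rightarrow> complex) \<Rightarrow> bool" where
  "pure_state I \<psi> \<longleftrightarrow> (\<Sum>x\<in>I. (cmod (\<psi> x))\<^sup>2) = 1"

(* single-party reduced density matrix rho_i = Tr_{all but i} |psi><psi| *)
definition reduced_dm :: "nat \<Rightarrow> (nat \<Rightarrow> nat) \<Rightarrow> (idx \<Rightarrow> complex) \<Rightarrow> nat \<Rightarrow> complex mat" where
  "reduced_dm n d \<psi> i = mat (d i) (d i)
     (\<lambda>(a, b). \<Sum>x\<in>basis_idx n d. if x i = a then \<psi> x * cnj (\<psi> (x(i := b))) else 0)"

definition mat_rank :: "complex mat \<Rightarrow> nat" where
  "mat_rank A = vec_space.rank (dim_row A) A"

definition fully_entangled :: "nat \<Rightarrow> (nat \<Rightarrow> nat) \<Rightarrow> (idx \<Rightarrow> complex) \<Rightarrow> bool" where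
  "fully_entangled n d \<psi> \<longleftrightarrow> (\<forall>i<n. mat_rank (reduced_dm n d \<psi> i) = d i)"

definition kraus_apply :: "idx set \<Rightarrow> ('k \<Rightarrow> op) \<Rightarrow> 'k set \<Rightarrow> op \<Rightarrow> op" where
  "kraus_apply I K S \<rho> = (\<lambda>x y. if x \<in> I \<and> y \<in> I then
      (\<Sum>k\<in>S. \<Sum>z\<in>I. \<Sum>w\<in>I. K k x z * \<rho> z w * cnj (K k y w)) else 0)"

definition kraus_complete :: "idx set \<Rightarrow> ('k \<Rightarrow> op) \<Rightarrow> 'k set \<Rightarrow> bool" where
  "kraus_complete I K S \<longleftrightarrow>
     (\<forall>x\<in>I. \<forall>y\<in>I. (\<Sum>k\<in>S. \<Sum>z\<in>I. cnj (K k z x) * K k z y) = op_id x y)"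

definition loc_unitary :: "nat \<Rightarrow> lop \<Rightarrow> bool" where
  "loc_unitary D U \<longleftrightarrow>
     (\<forall>a<D. \<forall>b<D. (\<Sum>c<D. cnj (U c a) * U c b) = (if a = b then 1 else 0)) \<and>
     (\<forall>a<D. \<forall>b<D. (\<Sum>c<D. U a c * cnj (U b c)) = (if a = b then 1 else 0))"

definition loc_invertible :: "nat \<Rightarrow> lop \<Rightarrow> bool" where
  "loc_invertible D A \<longleftrightarrow> (\<exists>B.
     (\<forall>a<D. \<forall>b<D. (\<Sum>c<D. B a c * A c b) = (if a = b then 1 else 0)) \<and>
     (\<forall>a<D. \<forall>b<D. (\<Sum>c<D. A a c * B c b) = (if a = b then 1 else 0)))"

definition SEP1 :: "nat \<Rightarrow> (nat \<Rightarrow> nat) \<Rightarrow> (op \<Rightarrow> op) set" where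
  "SEP1 n d = {\<Lambda>. \<exists>(S :: nat set) (A :: nat \<Rightarrow> nat \<Rightarrow> lop).
      finite S \<and>
      (\<forall>k\<in>S. \<forall>j<n. loc_invertible (d j) (A k j)) \<and>
      kraus_complete (basis_idx n d) (\<lambda>k. tens n (A k)) S \<and>
      \<Lambda> = kraus_apply (basis_idx n d) (\<lambda>k. tens n (A k)) S}"

(* A history h is the list of outcomes of the previous rounds.
   After history h: party  s h  measures with outcome set  Out h  (finite),
   for outcome o the local factors are  L h oc j  (j < n): a measurement operator
   for j = s h, unitaries for all other parties. *)
definition histories :: "(nat list \<Rightarrow> nat set) \<Rightarrow> nat \<Rightarrow> nat list set" where
  "histories Out k = {h. length h = k \<and> (\<forall>i<k. h ! i \<in> Out (take i h))}"

primrec locc_kraus :: "nat \<Rightarrow> idx set \<Rightarrow> (nat list \<Rightarrow> nat \<Rightarrow> nat \<Rightarrow> lop) \<Rightarrow> nat list \<Rightarrow> nat \<Rightarrow> op" where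
  "locc_kraus n I L h 0 = op_id"
| "locc_kraus n I L h (Suc k) =
     op_mult I (tens n (L (take k h) (h ! k))) (locc_kraus n I L h k)"

definition locc_round_ok :: "nat \<Rightarrow> (nat \<Rightarrow> nat) \<Rightarrow> (nat list \<Rightarrow> nat set) \<Rightarrow> (nat list \<Rightarrow> nat)
    \<Rightarrow> (nat list \<Rightarrow> nat \<Rightarrow> nat \<Rightarrow> lop) \<Rightarrow> nat list \<Rightarrow> bool" where
  "locc_round_ok n d Out s L h \<longleftrightarrow>
     finite (Out h) \<and> s h < n \<and>
     (\<forall>oc\<in>Out h. \<forall>j<n. j \<noteq> s h \<longrightarrow> loc_unitary (d j) (L h oc j)) \<and>
     (\<forall>a<d (s h). \<forall>b<d (s h).
        (\<Sum>oc\<in>Out h. \<Sum>c<d (s h). cnj (L h oc (s h) c a) * L h oc (s h) c b) = (if a = b then 1 else 0))"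

definition LOCC_N :: "nat \<Rightarrow> (nat \<Rightarrow> nat) \<Rightarrow> (op \<Rightarrow> op) set" where
  "LOCC_N n d = {\<Lambda>. \<exists>(m :: nat) Out s L.
      (\<forall>k<m. \<forall>h\<in>histories Out k. locc_round_ok n d Out s L h) \<and>
      \<Lambda> = kraus_apply (basis_idx n d) (\<lambda>h. locc_kraus n (basis_idx n d) L h m) (histories Out m)}"

end

theory Submission
  imports Defs "HOL-Library.Countable"
begin

definition lid :: lop where "lid = (\<lambda>a b. if a = b then 1 else 0)"
definition lmul :: "nat \<Rightarrow> lop \<Rightarrow> lop \<Rightarrow> lop" where
  "lmul D A B = (\<lambda>a b. \<Sum>c<D. A a c * B c b)"
definition leq :: "nat \<Rightarrow> lop \<Rightarrow> lop \<Rightarrow> bool" where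
  "leq D A B \<longleftrightarrow> (\<forall>a<D. \<forall>b<D. A a b = B a b)"
definition app :: "idx set \<Rightarrow> op \<Rightarrow> (idx \<Rightarrow> complex) \<Rightarrow> idx \<Rightarrow> complex" where
  "app I K v = (\<lambda>x. \<Sum>z\<in>I. K x z * v z)"
definition gram :: "idx set \<Rightarrow> op \<Rightarrow> op" where
  "gram I K = (\<lambda>x y. \<Sum>z\<in>I. cnj (K z x) * K z y)"
definition copf :: "nat \<Rightarrow> (nat \<Rightarrow> complex) \<Rightarrow> nat \<Rightarrow> lop" where
  "copf j w = (\<lambda>i. if i = j then (\<lambda>_ b. w b) else lid)"
definition Full :: "nat \<Rightarrow> (nat \<Rightarrow> nat) \<Rightarrow> nat \<Rightarrow> (idx \<Rightarrow> complex) \<Rightarrow> bool" where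
  "Full n d j \<chi> \<longleftrightarrow> (\<forall>w. (\<forall>x\<in>basis_idx n d. app (basis_idx n d) (tens n (copf j w)) \<chi> x = 0)
      \<longrightarrow> (\<forall>a<d j. w a = 0))"

lemma basis_Suc:
  "basis_idx (Suc n) d = (\<lambda>(z,c). z(n:=c)) ` (basis_idx n d \<times> {..<d n})"
proof -
  have 1: "x \<in> (\<lambda>(z,c). z(n:=c)) ` (basis_idx n d \<times> {..<d n})" if x: "x \<in> basis_idx (Suc n) d" for x
  proof -
    have "x(n:=0) \<in> basis_idx n d" using x by (auto simp: basis_idx_def)
    moreover have "x n < d n" using x by (auto simp: basis_idx_def)
    ultimately show ?thesis by (intro image_eqI[where x="(x(n:=0), x n)"]) auto
  qed
  have 2: "x \<in> basis_idx (Suc n) d" if "x \<in> (\<lambda>(z,c). z(n:=c)) ` (basis_idx n d \<times> {..<d n})" for x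
    using that by (auto simp: basis_idx_def less_Suc_eq)
  show ?thesis using 1 2 by blast
qed

lemma basis_inj: "inj_on (\<lambda>(z,c). z(n:=c)) (basis_idx n d \<times> {..<d n})"
proof (rule inj_onI, clarsimp)
  fix z c z' c' assume z: "z \<in> basis_idx n d" and z': "z' \<in> basis_idx n d"
    and e: "z(n := c) = z'(n := c')"
  have "c = c'" using fun_cong[OF e, of n] by simp
  moreover have "z = z'"
  proof
    fix j show "z j = z' j"
      using fun_cong[OF e, of j] z z' by (cases "j = n") (auto simp: basis_idx_def)
  qed
  ultimately show "z = z' \<and> c = c'" by simp
qed

lemma finite_basis: "finite (basis_idx n d)"
proof (induction n)
  case 0
  have "basis_idx 0 d = {\<lambda>_. 0}" by (auto simp: basis_idx_def)
  then show ?case by simp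
next
  case (Suc n) then show ?case by (simp add: basis_Suc)
qed

lemma sum_basis_prod:
  fixes f :: "nat \<Rightarrow> nat \<Rightarrow> complex"
  shows "(\<Sum>z\<in>basis_idx n d. \<Prod>j<n. f j (z j)) = (\<Prod>j<n. \<Sum>c<d j. f j c)"
proof (induction n)
  case 0
  have "basis_idx 0 d = {\<lambda>_. 0}" by (auto simp: basis_idx_def)
  then show ?case by simp
next
  case (Suc n)
  have "(\<Sum>z\<in>basis_idx (Suc n) d. \<Prod>j<Suc n. f j (z j))
      = (\<Sum>(z,c)\<in>basis_idx n d \<times> {..<d n}. \<Prod>j<Suc n. f j ((z(n := c)) j))"
    unfolding basis_Suc by (subst sum.reindex[OF basis_inj]) (simp add: case_prod_beta)
  also have "\<dots> = (\<Sum>z\<in>basis_idx n d. \<Sum>c<d n. \<Prod>j<Suc n. f j ((z(n := c)) j))"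
    by (subst sum.cartesian_product) (simp add: case_prod_beta)
  also have "\<dots> = (\<Sum>z\<in>basis_idx n d. \<Sum>c<d n. (\<Prod>j<n. f j (z j)) * f n c)"
    by (intro sum.cong refl) (simp add: prod.lessThan_Suc)
  also have "\<dots> = (\<Sum>z\<in>basis_idx n d. \<Prod>j<n. f j (z j)) * (\<Sum>c<d n. f n c)"
    by (simp only: sum_product)
  finally show ?case by (simp add: Suc prod.lessThan_Suc)
qed

lemma tens_comp:
  "op_mult (basis_idx n d) (tens n A) (tens n B) x y = tens n (\<lambda>j. lmul (d j) (A j) (B j)) x y"
proof -
  have "op_mult (basis_idx n d) (tens n A) (tens n B) x y
      = (\<Sum>z\<in>basis_idx n d. \<Prod>j<n. A j (x j) (z j) * B j (z j) (y j))"
    unfolding op_mult_def tens_def by (simp add: prod.distrib)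
  also have "\<dots> = tens n (\<lambda>j. lmul (d j) (A j) (B j)) x y"
    unfolding tens_def lmul_def by (rule sum_basis_prod)
  finally show ?thesis .
qed

lemma app_comp: "app I (op_mult I A B) v x = app I A (app I B v) x"
proof -
  have "app I (op_mult I A B) v x = (\<Sum>z\<in>I. \<Sum>w\<in>I. A x w * B w z * v z)"
    unfolding app_def op_mult_def by (simp add: sum_distrib_right)
  also have "\<dots> = (\<Sum>w\<in>I. \<Sum>z\<in>I. A x w * B w z * v z)"
    by (rule sum.swap)
  also have "\<dots> = app I A (app I B v) x"
    unfolding app_def by (simp add: sum_distrib_left mult.assoc)
  finally show ?thesis .
qed

lemma app_cong: "(\<And>z. z \<in> I \<Longrightarrow> v z = v' z) \<Longrightarrow> app I K v x = app I K v' x"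
  unfolding app_def by (intro sum.cong) auto

lemma app_cong_op: "(\<And>z. z \<in> I \<Longrightarrow> K x z = K' x z) \<Longrightarrow> app I K v x = app I K' v x"
  unfolding app_def by (intro sum.cong) auto

lemma tens_cong:
  assumes "\<forall>j<n. leq (d j) (A j) (B j)" "x \<in> basis_idx n d" "y \<in> basis_idx n d"
  shows "tens n A x y = tens n B x y"
  using assms unfolding tens_def leq_def basis_idx_def by (intro prod.cong) auto

lemma tens_lid: "x \<in> basis_idx n d \<Longrightarrow> y \<in> basis_idx n d \<Longrightarrow> tens n (\<lambda>_. lid) x y = op_id x y"
proof -
  assume x: "x \<in> basis_idx n d" and y: "y \<in> basis_idx n d"
  show ?thesis
  proof (cases "x = y")
    case True then show ?thesis by (simp add: tens_def lid_def op_id_def)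
  next
    case False
    then obtain j where "x j \<noteq> y j" by auto
    moreover have "j < n" using x y calculation by (auto simp: basis_idx_def) (metis not_le)
    ultimately show ?thesis using False
      by (auto simp: tens_def lid_def op_id_def intro!: prod_zero)
  qed
qed

lemma app_tens_lid: "x \<in> basis_idx n d \<Longrightarrow> app (basis_idx n d) (tens n (\<lambda>_. lid)) v x = v x"
proof -
  assume x: "x \<in> basis_idx n d"
  have "app (basis_idx n d) (tens n (\<lambda>_. lid)) v x = (\<Sum>z\<in>basis_idx n d. if x = z then v z else 0)"
    unfolding app_def by (intro sum.cong refl) (simp add: tens_lid[OF x] op_id_def)
  also have "\<dots> = v x" using x by (simp add: sum.delta finite_basis)
  finally show ?thesis .
qed

lemma tens_comp_eq:
  assumes "\<forall>j<n. leq (d j) (lmul (d j) (A j) (B j)) (lmul (d j) (A' j) (B' j))"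
    and x: "x \<in> basis_idx n d"
  shows "app (basis_idx n d) (tens n A) (app (basis_idx n d) (tens n B) \<chi>) x
       = app (basis_idx n d) (tens n A') (app (basis_idx n d) (tens n B') \<chi>) x"
proof -
  have "app (basis_idx n d) (tens n A) (app (basis_idx n d) (tens n B) \<chi>) x
     = app (basis_idx n d) (tens n (\<lambda>j. lmul (d j) (A j) (B j))) \<chi> x"
    by (simp only: app_comp[symmetric]) (rule app_cong_op, simp add: tens_comp)
  also have "\<dots> = app (basis_idx n d) (tens n (\<lambda>j. lmul (d j) (A' j) (B' j))) \<chi> x"
    by (rule app_cong_op, rule tens_cong) (use assms in auto)
  also have "\<dots> = app (basis_idx n d) (tens n A') (app (basis_idx n d) (tens n B') \<chi>) x"
    by (simp only: app_comp[symmetric]) (rule app_cong_op, simp add: tens_comp)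
  finally show ?thesis .
qed

lemma lmul_lid_left: "a < D \<Longrightarrow> lmul D lid B a b = B a b"
proof -
  assume a: "a < D"
  have "lmul D lid B a b = (\<Sum>c<D. if a = c then B c b else 0)"
    unfolding lmul_def lid_def by (intro sum.cong) auto
  also have "\<dots> = B a b" using a by (simp add: sum.delta)
  finally show ?thesis .
qed
lemma lmul_lid_right: "b < D \<Longrightarrow> lmul D A lid a b = A a b"
proof -
  assume b: "b < D"
  have "lmul D A lid a b = (\<Sum>c<D. if c = b then A a c else 0)"
    unfolding lmul_def lid_def by (intro sum.cong) auto
  also have "\<dots> = A a b" using b by (simp add: sum.delta')
  finally show ?thesis .
qed
lemma lmul_assoc: "lmul D (lmul D A B) C = lmul D A (lmul D B C)"
proof (intro ext)
  fix a b
  have "lmul D (lmul D A B) C a b = (\<Sum>e<D. \<Sum>c<D. A a c * B c e * C e b)"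
    unfolding lmul_def by (simp add: sum_distrib_right)
  also have "\<dots> = (\<Sum>c<D. \<Sum>e<D. A a c * B c e * C e b)" by (rule sum.swap)
  also have "\<dots> = lmul D A (lmul D B C) a b"
    unfolding lmul_def by (simp add: sum_distrib_left mult.assoc)
  finally show "lmul D (lmul D A B) C a b = lmul D A (lmul D B C) a b" .
qed


lemma app_zero: "(\<And>z. z \<in> I \<Longrightarrow> v z = 0) \<Longrightarrow> app I K v x = 0"
  unfolding app_def by (simp)

lemma app_scale: "app I K (\<lambda>z. c * v z) x = c * app I K v x"
  unfolding app_def by (simp add: sum_distrib_left mult_ac)

lemma app_cop:
  assumes j: "j < n" and x: "x \<in> basis_idx n d"
  shows "app (basis_idx n d) (tens n (copf j w)) \<chi> x = (\<Sum>b<d j. w b * \<chi> (x(j:=b)))"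
proof -
  let ?J = "(\<lambda>b. x(j:=b)) ` {..<d j}"
  have JI: "?J \<subseteq> basis_idx n d" using x j by (auto simp: basis_idx_def)
  have inj: "inj_on (\<lambda>b. x(j:=b)) {..<d j}" by (rule inj_onI) (metis fun_upd_same)
  have t1: "tens n (copf j w) x z = w (z j)" if "z \<in> ?J" for z
  proof -
    obtain b where b: "z = x(j:=b)" using \<open>z \<in> ?J\<close> by auto
    have "tens n (copf j w) x z = (\<Prod>i<n. if i = j then w (z j) else 1)"
      unfolding tens_def by (intro prod.cong refl) (auto simp: copf_def lid_def b)
    also have "\<dots> = w (z j)" using j by (simp add: prod.delta)
    finally show ?thesis .
  qed
  have t0: "tens n (copf j w) x z = 0" if z: "z \<in> basis_idx n d" "z \<notin> ?J" for z
  proof -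
    have "\<exists>i<n. i \<noteq> j \<and> x i \<noteq> z i"
    proof (rule ccontr)
      assume "\<not> ?thesis"
      then have "z = x(j := z j)" using x z(1) by (auto simp: basis_idx_def fun_eq_iff) (metis not_le)
      moreover have "z j < d j" using z(1) j by (auto simp: basis_idx_def)
      ultimately show False using z(2) by (metis image_eqI lessThan_iff)
    qed
    then obtain i where "i<n" "i \<noteq> j" "x i \<noteq> z i" by auto
    then show ?thesis unfolding tens_def
      by (intro prod_zero) (auto simp: copf_def lid_def intro!: bexI[where x=i])
  qed
  have "app (basis_idx n d) (tens n (copf j w)) \<chi> x = (\<Sum>z\<in>?J. tens n (copf j w) x z * \<chi> z)"
    unfolding app_def using JI t0 by (intro sum.mono_neutral_right finite_basis) auto
  also have "\<dots> = (\<Sum>z\<in>?J. w (z j) * \<chi> z)" using t1 by (intro sum.cong) auto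
  also have "\<dots> = (\<Sum>b<d j. w b * \<chi> (x(j:=b)))" by (subst sum.reindex[OF inj]) simp
  finally show ?thesis .
qed

lemma full_from_rank:
  assumes j: "j < n" and r: "mat_rank (reduced_dm n d \<chi> j) = d j"
  shows "Full n d j \<chi>"
  unfolding Full_def
proof (rule allI, rule impI)
  fix w assume h: "\<forall>x\<in>basis_idx n d. app (basis_idx n d) (tens n (copf j w)) \<chi> x = 0"
  let ?R = "reduced_dm n d \<chi> j"
  have car: "?R \<in> carrier_mat (d j) (d j)" by (simp add: reduced_dm_def)
  have "vec_space.rank (d j) ?R = d j" using r by (simp add: mat_rank_def reduced_dm_def)
  then have det: "det ?R \<noteq> 0" using vec_space.det_rank_iff[OF car] by simp
  define u where "u = vec (d j) (\<lambda>b. cnj (w b))"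
  have "?R *\<^sub>v u = 0\<^sub>v (d j)"
  proof (rule eq_vecI)
    fix a assume a: "a < dim_vec (0\<^sub>v (d j) :: complex vec)"
    then have a': "a < d j" by simp
    have "(?R *\<^sub>v u) $ a = (\<Sum>b<d j. ?R $$ (a,b) * cnj (w b))"
      using a' by (simp add: scalar_prod_def u_def atLeast0LessThan reduced_dm_def)
    also have "\<dots> = (\<Sum>b<d j. \<Sum>x\<in>basis_idx n d. (if x j = a then \<chi> x * cnj (\<chi> (x(j:=b))) else 0) * cnj (w b))"
      using a' by (intro sum.cong refl) (simp add: reduced_dm_def sum_distrib_right)
    also have "\<dots> = (\<Sum>b<d j. \<Sum>x\<in>basis_idx n d. if x j = a then \<chi> x * (cnj (w b * \<chi> (x(j:=b)))) else 0)"
      by (intro sum.cong refl) (simp add: mult_ac)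
    also have "\<dots> = (\<Sum>x\<in>basis_idx n d. \<Sum>b<d j. if x j = a then \<chi> x * (cnj (w b * \<chi> (x(j:=b)))) else 0)"
      by (rule sum.swap)
    also have "\<dots> = (\<Sum>x\<in>basis_idx n d. if x j = a then \<chi> x * cnj (\<Sum>b<d j. w b * \<chi> (x(j:=b))) else 0)"
      by (intro sum.cong refl) (simp add: sum_distrib_left)
    also have "\<dots> = 0"
      using h by (intro sum.neutral) (simp add: app_cop[OF j])
    finally show "(?R *\<^sub>v u) $ a = 0\<^sub>v (d j) $ a" using a by simp
  qed (simp add: reduced_dm_def)
  moreover have "u \<in> carrier_vec (d j)" by (simp add: u_def)
  ultimately have "u = 0\<^sub>v (d j)" using det det_0_iff_vec_prod_zero_field[OF car] by blast
  then show "\<forall>a<d j. w a = 0"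
  proof (intro allI impI)
    fix a assume a: "a < d j" and "u = 0\<^sub>v (d j)"
    then have "u $ a = 0" by simp
    then show "w a = 0" using a by (simp add: u_def)
  qed
qed

lemma lop_inv_or_kernel:
  "loc_invertible D A \<or> (\<exists>w. (\<exists>a<D. w a \<noteq> 0) \<and> (\<forall>b<D. (\<Sum>a<D. w a * A a b) = 0))"
proof -
  define M where "M = (mat D D (\<lambda>(a,b). A a b) :: complex mat)"
  have car: "M \<in> carrier_mat D D" by (simp add: M_def)
  show ?thesis
  proof (cases "det M = 0")
    case True
    then have "det (transpose_mat M) = 0" using det_transpose[OF car] by simp
    then obtain v where v: "v \<in> carrier_vec D" "v \<noteq> 0\<^sub>v D" "transpose_mat M *\<^sub>v v = 0\<^sub>v D"
      using det_0_iff_vec_prod_zero_field[of "transpose_mat M" D] car by auto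
    have "\<exists>a<D. v $ a \<noteq> 0"
    proof (rule ccontr)
      assume "\<not> ?thesis"
      then have "v = 0\<^sub>v D" using v(1) by (intro eq_vecI) auto
      then show False using v(2) by simp
    qed
    moreover have "(\<Sum>a<D. v $ a * A a b) = 0" if b: "b < D" for b
    proof -
      have "(transpose_mat M *\<^sub>v v) $ b = (\<Sum>a<D. v $ a * A a b)"
        using b v(1) by (simp add: M_def scalar_prod_def atLeast0LessThan mult.commute)
      then show ?thesis using v(3) b by simp
    qed
    ultimately show ?thesis by blast
  next
    case False
    then have "M \<in> Units (ring_mat TYPE(complex) D ())" by (rule det_non_zero_imp_unit[OF car])
    then obtain N where N: "N \<in> carrier_mat D D" "N * M = 1\<^sub>m D" "M * N = 1\<^sub>m D"
      by (auto simp: Units_def ring_mat_def)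
    have 1: "(\<Sum>c<D. N $$ (a,c) * A c b) = (if a = b then 1 else 0)" if "a<D" "b<D" for a b
    proof -
      have "(N * M) $$ (a,b) = (\<Sum>c<D. N $$ (a,c) * A c b)"
        using that N(1) by (simp add: M_def scalar_prod_def atLeast0LessThan)
      then show ?thesis using N(2) that by simp
    qed
    have 2: "(\<Sum>c<D. A a c * N $$ (c,b)) = (if a = b then 1 else 0)" if "a<D" "b<D" for a b
    proof -
      have "(M * N) $$ (a,b) = (\<Sum>c<D. A a c * N $$ (c,b))"
        using that N(1) by (simp add: M_def scalar_prod_def atLeast0LessThan)
      then show ?thesis using N(3) that by simp
    qed
    have "loc_invertible D A" unfolding loc_invertible_def
      by (rule exI[where x="\<lambda>a c. N $$ (a,c)"]) (use 1 2 in auto)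
    then show ?thesis by simp
  qed
qed

lemma contract_through:
  assumes x: "x \<in> basis_idx n d"
  shows "app (basis_idx n d) (tens n (copf j w)) (app (basis_idx n d) (tens n B) \<chi>) x
       = app (basis_idx n d) (tens n (\<lambda>i. if i = j then lid else B i))
            (app (basis_idx n d) (tens n (copf j (\<lambda>b. \<Sum>a<d j. w a * B j a b))) \<chi>) x"
proof (rule tens_comp_eq[OF _ x], intro allI impI)
  fix i assume "i < n"
  show "leq (d i) (lmul (d i) (copf j w i) (B i))
      (lmul (d i) (if i = j then lid else B i) (copf j (\<lambda>b. \<Sum>a<d j. w a * B j a b) i))"
    unfolding leq_def
    by (cases "i = j") (auto simp: lmul_lid_left lmul_lid_right copf_def lmul_def[of _ "\<lambda>_ b. w b"])
qed

lemma inv_full: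
  assumes j: "j < n" and c: "c \<noteq> 0" and F: "Full n d j \<phi>"
    and eq: "\<forall>x\<in>basis_idx n d. app (basis_idx n d) (tens n B) \<chi> x = c * \<phi> x"
  shows "loc_invertible (d j) (B j) \<and> Full n d j \<chi>"
proof -
  let ?I = "basis_idx n d"
  have key: "app ?I (tens n (copf j w)) \<phi> x = 0"
    if x: "x \<in> ?I" and z: "\<forall>y\<in>?I. app ?I (tens n (copf j (\<lambda>b. \<Sum>a<d j. w a * B j a b))) \<chi> y = 0" for w x
  proof -
    have "c * app ?I (tens n (copf j w)) \<phi> x = app ?I (tens n (copf j w)) (\<lambda>z. c * \<phi> z) x"
      by (simp add: app_scale)
    also have "\<dots> = app ?I (tens n (copf j w)) (app ?I (tens n B) \<chi>) x"
      using eq by (intro app_cong) auto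
    also have "\<dots> = 0" unfolding contract_through[OF x] by (rule app_zero) (use z in auto)
    finally show ?thesis using c by simp
  qed
  have inv: "loc_invertible (d j) (B j)"
  proof (rule ccontr)
    assume ni: "\<not> ?thesis"
    then obtain w where w: "\<exists>a<d j. w a \<noteq> 0" "\<forall>b<d j. (\<Sum>a<d j. w a * B j a b) = 0"
      using lop_inv_or_kernel[of "d j" "B j"] by blast
    have "\<forall>x\<in>?I. app ?I (tens n (copf j w)) \<phi> x = 0"
      using w(2) by (intro ballI key) (auto simp: app_cop[OF j])
    then have "\<forall>a<d j. w a = 0" using F unfolding Full_def by blast
    then show False using w(1) by blast
  qed
  moreover have "Full n d j \<chi>" unfolding Full_def
  proof (rule allI, rule impI)
    fix v assume v: "\<forall>x\<in>?I. app ?I (tens n (copf j v)) \<chi> x = 0"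
    obtain B' where B': "\<forall>a<d j. \<forall>b<d j. (\<Sum>c<d j. B' a c * B j c b) = (if a = b then 1 else 0)"
      using inv unfolding loc_invertible_def by blast
    define w where "w = (\<lambda>a. \<Sum>e<d j. v e * B' e a)"
    have ww: "(\<Sum>a<d j. w a * B j a b) = v b" if b: "b < d j" for b
    proof -
      have "(\<Sum>a<d j. w a * B j a b) = (\<Sum>a<d j. \<Sum>e<d j. v e * B' e a * B j a b)"
        by (simp add: w_def sum_distrib_right)
      also have "\<dots> = (\<Sum>e<d j. \<Sum>a<d j. v e * B' e a * B j a b)" by (rule sum.swap)
      also have "\<dots> = (\<Sum>e<d j. v e * (if e = b then 1 else 0))"
        using B' b by (intro sum.cong refl) (simp add: sum_distrib_left[symmetric] mult.assoc)
      also have "\<dots> = v b" using b by (simp add: sum.delta' if_distrib cong: if_cong)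
      finally show ?thesis .
    qed
    have "\<forall>y\<in>?I. app ?I (tens n (copf j (\<lambda>b. \<Sum>a<d j. w a * B j a b))) \<chi> y = 0"
      using v ww by (simp add: app_cop[OF j])
    then have "\<forall>x\<in>?I. app ?I (tens n (copf j w)) \<phi> x = 0" using key by blast
    then have w0: "\<forall>a<d j. w a = 0" using F unfolding Full_def by blast
    show "\<forall>a<d j. v a = 0" using ww w0 by (metis (no_types, lifting) mult_zero_left sum.neutral lessThan_iff)
  qed
  ultimately show ?thesis by blast
qed

lemma round_zero:
  assumes s: "s < n" and F: "Full n d s \<chi>"
    and U: "\<forall>j<n. j \<noteq> s \<longrightarrow> loc_unitary (d j) (A j)"
    and z: "\<forall>x\<in>basis_idx n d. app (basis_idx n d) (tens n A) \<chi> x = 0"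
  shows "\<forall>a<d s. \<forall>b<d s. A s a b = 0"
proof (intro allI impI)
  fix a b assume a: "a < d s" and b: "b < d s"
  let ?I = "basis_idx n d"
  define E where "E = (\<lambda>i. if i = s then (\<lambda>_ b. if b = a then 1 else 0) else (\<lambda>p q. cnj (A i q p)))"
  have "app ?I (tens n (copf s (\<lambda>b. A s a b))) \<chi> x = 0" if x: "x \<in> ?I" for x
  proof -
    have "app ?I (tens n (copf s (\<lambda>b. A s a b))) \<chi> x
        = app ?I (tens n (\<lambda>_. lid)) (app ?I (tens n (copf s (\<lambda>b. A s a b))) \<chi>) x"
      by (rule app_tens_lid[OF x, symmetric])
    also have "\<dots> = app ?I (tens n E) (app ?I (tens n A) \<chi>) x"
    proof (rule tens_comp_eq[OF _ x], intro allI impI)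
      fix i assume i: "i < n"
      show "leq (d i) (lmul (d i) lid (copf s (\<lambda>b. A s a b) i)) (lmul (d i) (E i) (A i))"
      proof (cases "i = s")
        case True
        have "lmul (d s) (\<lambda>_ b. if b = a then 1 else 0) (A s) p q = A s a q" for p q
        proof -
          have "lmul (d s) (\<lambda>_ b. if b = a then 1 else 0) (A s) p q = (\<Sum>c<d s. if c = a then A s c q else 0)"
            unfolding lmul_def by (intro sum.cong) auto
          also have "\<dots> = A s a q" using a by (simp add: sum.delta')
          finally show ?thesis .
        qed
        then show ?thesis using True unfolding leq_def
          by (auto simp: lmul_lid_left copf_def E_def)
      next
        case False
        have "lmul (d i) (E i) (A i) p q = lid p q" if "p < d i" "q < d i" for p q
          using U i False that unfolding loc_unitary_def E_def lmul_def lid_def by auto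
        then show ?thesis using False unfolding leq_def
          by (auto simp: lmul_lid_left copf_def)
      qed
    qed
    also have "\<dots> = 0" by (rule app_zero) (use z in auto)
    finally show ?thesis .
  qed
  then show "A s a b = 0" using F b unfolding Full_def by blast
qed


primrec lp :: "(nat \<Rightarrow> nat) \<Rightarrow> (nat list \<Rightarrow> nat \<Rightarrow> nat \<Rightarrow> lop) \<Rightarrow> nat list \<Rightarrow> nat \<Rightarrow> nat \<Rightarrow> lop" where
  "lp d L h 0 = (\<lambda>j. lid)"
| "lp d L h (Suc k) = (\<lambda>j. lmul (d j) (L (take k h) (h ! k) j) (lp d L h k j))"

primrec lq :: "(nat \<Rightarrow> nat) \<Rightarrow> (nat list \<Rightarrow> nat \<Rightarrow> nat \<Rightarrow> lop) \<Rightarrow> nat list \<Rightarrow> nat \<Rightarrow> nat \<Rightarrow> nat \<Rightarrow> lop" where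
  "lq d L h k 0 = (\<lambda>j. lid)"
| "lq d L h k (Suc m) = (if m < k then (\<lambda>j. lid)
      else (\<lambda>j. lmul (d j) (L (take m h) (h ! m) j) (lq d L h k m j)))"

lemma locc_tens:
  "x \<in> basis_idx n d \<Longrightarrow> y \<in> basis_idx n d \<Longrightarrow>
    locc_kraus n (basis_idx n d) L h k x y = tens n (lp d L h k) x y"
proof (induction k arbitrary: x y)
  case 0
  then show ?case by (simp add: tens_lid)
next
  case (Suc k)
  have "locc_kraus n (basis_idx n d) L h (Suc k) x y
      = op_mult (basis_idx n d) (tens n (L (take k h) (h ! k))) (tens n (lp d L h k)) x y"
    using Suc by (simp add: op_mult_def)
  also have "\<dots> = tens n (lp d L h (Suc k)) x y" by (simp add: tens_comp)
  finally show ?case .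
qed

lemma lp_take_eq: "take k h = take k h' \<Longrightarrow> lp d L h k = lp d L h' k"
proof (induction k arbitrary: h h')
  case 0 then show ?case by simp
next
  case (Suc k)
  have tk: "take k h = take k h'"
    using arg_cong[OF Suc.prems, of "take k"] by (simp add: min_def)
  show ?case
  proof (cases "k < length h")
    case True
    have "length (take (Suc k) h') = Suc k"
      using arg_cong[OF Suc.prems, of length] True by simp
    then have k': "k < length h'" by (simp add: min_def split: if_splits)
    have "h ! k = take (Suc k) h ! k" by simp
    also have "\<dots> = take (Suc k) h' ! k" using Suc.prems by simp
    also have "\<dots> = h' ! k" by simp
    finally have "h ! k = h' ! k" .
    then show ?thesis using Suc.IH[OF tk] tk by simp
  next
    case False
    have "take (Suc k) h = h" using False by simp
    then have hh: "h = take (Suc k) h'" using Suc.prems by simp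
    then have "length h' \<le> k" using False by (simp add: min_def split: if_splits)
    then have "take (Suc k) h' = h'" by simp
    then show ?thesis using hh by simp
  qed
qed

lemma lp_take: "lp d L h k = lp d L (take k h) k"
  by (rule lp_take_eq) simp

lemma lmul_leq_right: "leq D B B' \<Longrightarrow> b < D \<Longrightarrow> lmul D A B a b = lmul D A B' a b"
  unfolding leq_def lmul_def by (intro sum.cong) auto

lemma lp_split:
  "k \<le> m \<Longrightarrow> leq (d j) (lp d L h m j) (lmul (d j) (lq d L h k m j) (lp d L h k j))"
proof (induction m)
  case 0
  then show ?case by (simp add: leq_def lmul_lid_left)
next
  case (Suc m)
  show ?case
  proof (cases "k = Suc m")
    case True
    then show ?thesis by (simp add: leq_def lmul_lid_left del: lp.simps)
  next
    case False
    then have km: "k \<le> m" using Suc by simp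
    have "lp d L h (Suc m) j a b = lmul (d j) (lq d L h k (Suc m) j) (lp d L h k j) a b"
      if "a < d j" "b < d j" for a b
    proof -
      have "lp d L h (Suc m) j a b = lmul (d j) (L (take m h) (h ! m) j) (lp d L h m j) a b" by simp
      also have "\<dots> = lmul (d j) (L (take m h) (h ! m) j) (lmul (d j) (lq d L h k m j) (lp d L h k j)) a b"
        using Suc.IH[OF km] unfolding leq_def lmul_def by (intro sum.cong) (auto simp: that)
      also have "\<dots> = lmul (d j) (lq d L h k (Suc m) j) (lp d L h k j) a b"
        using km by (simp add: lmul_assoc)
      finally show ?thesis .
    qed
    then show ?thesis unfolding leq_def by blast
  qed
qed

lemma hist_0: "histories Out 0 = {[]}"
  by (auto simp: histories_def)

lemma hist_Suc: "histories Out (Suc k) = (\<lambda>(h,oc). h @ [oc]) ` Sigma (histories Out k) Out"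
proof -
  have 1: "h' \<in> (\<lambda>(h,oc). h @ [oc]) ` Sigma (histories Out k) Out" if h': "h' \<in> histories Out (Suc k)" for h'
  proof -
    have len: "length h' = Suc k" using h' by (simp add: histories_def)
    have P: "\<forall>i<Suc k. h' ! i \<in> Out (take i h')" using h' by (simp add: histories_def)
    have ne: "h' \<noteq> []" using len by auto
    have bt: "butlast h' = take k h'" using len by (simp add: butlast_conv_take)
    have eq: "h' = (\<lambda>(h,oc). h @ [oc]) (butlast h', h' ! k)"
    proof -
      have B: "last h' = h' ! k" using ne len by (simp add: last_conv_nth)
      have "butlast h' @ [h' ! k] = butlast h' @ [last h']" using B by simp
      also have "\<dots> = h'" by (rule append_butlast_last_id[OF ne])
      finally show ?thesis by simp
    qed
    have "butlast h' \<in> histories Out k"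
      unfolding histories_def
    proof (intro CollectI conjI allI impI)
      show "length (butlast h') = k" using len by simp
      fix i assume i: "i < k"
      have "butlast h' ! i = h' ! i" using i len by (simp add: nth_butlast)
      moreover have "take i (butlast h') = take i h'" using i len by (simp add: take_butlast)
      ultimately show "butlast h' ! i \<in> Out (take i (butlast h'))" using P i by simp
    qed
    moreover have "h' ! k \<in> Out (butlast h')" using P bt by simp
    ultimately have "(butlast h', h' ! k) \<in> Sigma (histories Out k) Out" by simp
    then show ?thesis by (rule image_eqI[where f="\<lambda>(h,oc). h @ [oc]" and x="(butlast h', h' ! k)", OF eq])
  qed
  have 2: "h @ [oc] \<in> histories Out (Suc k)" if h: "h \<in> histories Out k" "oc \<in> Out h" for h oc
    unfolding histories_def
  proof (intro CollectI conjI allI impI)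
    have len: "length h = k" using h by (simp add: histories_def)
    then show "length (h @ [oc]) = Suc k" by simp
    fix i assume i: "i < Suc k"
    show "(h @ [oc]) ! i \<in> Out (take i (h @ [oc]))"
    proof (cases "i < k")
      case True
      then show ?thesis using h len by (simp add: nth_append histories_def)
    next
      case False
      then have "i = k" using i by simp
      then show ?thesis using h len by (simp add: nth_append)
    qed
  qed
  show ?thesis
  proof (rule equalityI)
    show "histories Out (Suc k) \<subseteq> (\<lambda>(h,oc). h @ [oc]) ` Sigma (histories Out k) Out"
      using 1 by (rule subsetI)
  next
    show "(\<lambda>(h,oc). h @ [oc]) ` Sigma (histories Out k) Out \<subseteq> histories Out (Suc k)"
    proof (rule subsetI)
      fix x assume "x \<in> (\<lambda>(h,oc). h @ [oc]) ` Sigma (histories Out k) Out"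
      then obtain h oc where "x = h @ [oc]" "h \<in> histories Out k" "oc \<in> Out h" by auto
      then show "x \<in> histories Out (Suc k)" using 2 by simp
    qed
  qed
qed

lemma snoc_inj: "inj_on (\<lambda>(h,oc). h @ [oc]) A"
  by (rule inj_onI) auto

lemma hist_finite:
  assumes "\<forall>k<m. \<forall>h\<in>histories Out k. finite (Out h)"
  shows "k \<le> m \<Longrightarrow> finite (histories Out k)"
proof (induction k)
  case 0 then show ?case by (simp add: hist_0)
next
  case (Suc k)
  then have f: "finite (histories Out k)" by simp
  have "finite (Sigma (histories Out k) Out)"
  proof (rule finite_SigmaI[OF f])
    fix h assume "h \<in> histories Out k"
    moreover have "k < m" using Suc.prems by simp
    ultimately show "finite (Out h)" using assms by blast
  qed
  then show ?case unfolding hist_Suc by (rule finite_imageI)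
qed

lemma take_hist: "h \<in> histories Out m \<Longrightarrow> k \<le> m \<Longrightarrow> take k h \<in> histories Out k"
  unfolding histories_def by (auto simp: min_def)

lemma Kh_snoc:
  assumes "length h = m"
  shows "tens n (lp d L (h @ [oc]) (Suc m)) = op_mult (basis_idx n d) (tens n (L h oc)) (tens n (lp d L h m))"
proof -
  have "lp d L (h @ [oc]) m = lp d L h m"
    using assms by (intro lp_take_eq) simp
  then show ?thesis using assms by (auto simp: tens_comp intro!: ext)
qed

lemma gram_comp:
  "gram I (op_mult I T K) x y = (\<Sum>u\<in>I. \<Sum>w\<in>I. cnj (K u x) * gram I T u w * K w y)"
proof -
  have "gram I (op_mult I T K) x y = (\<Sum>z\<in>I. \<Sum>u\<in>I. \<Sum>w\<in>I. cnj (K u x) * (cnj (T z u) * T z w) * K w y)"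
  proof -
    have "gram I (op_mult I T K) x y = (\<Sum>z\<in>I. \<Sum>u\<in>I. \<Sum>w\<in>I. cnj (T z u * K u x) * (T z w * K w y))"
      unfolding gram_def op_mult_def by (simp only: cnj_sum sum_product)
    also have "\<dots> = (\<Sum>z\<in>I. \<Sum>u\<in>I. \<Sum>w\<in>I. cnj (K u x) * (cnj (T z u) * T z w) * K w y)"
      by (intro sum.cong refl) (simp add: mult_ac)
    finally show ?thesis .
  qed
  also have "\<dots> = (\<Sum>u\<in>I. \<Sum>z\<in>I. \<Sum>w\<in>I. cnj (K u x) * (cnj (T z u) * T z w) * K w y)"
    by (rule sum.swap)
  also have "\<dots> = (\<Sum>u\<in>I. \<Sum>w\<in>I. \<Sum>z\<in>I. cnj (K u x) * (cnj (T z u) * T z w) * K w y)"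
    by (intro sum.cong refl sum.swap)
  also have "\<dots> = (\<Sum>u\<in>I. \<Sum>w\<in>I. cnj (K u x) * gram I T u w * K w y)"
    unfolding gram_def by (simp add: sum_distrib_left sum_distrib_right)
  finally show ?thesis .
qed

lemma gram_tens:
  "gram (basis_idx n d) (tens n A) u w = (\<Prod>j<n. \<Sum>c<d j. cnj (A j c (u j)) * A j c (w j))"
proof -
  have "gram (basis_idx n d) (tens n A) u w = (\<Sum>z\<in>basis_idx n d. \<Prod>j<n. cnj (A j (z j) (u j)) * A j (z j) (w j))"
    unfolding gram_def tens_def by (simp add: cnj_prod prod.distrib)
  also have "\<dots> = (\<Prod>j<n. \<Sum>c<d j. cnj (A j c (u j)) * A j c (w j))" by (rule sum_basis_prod)
  finally show ?thesis .
qed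

lemma round_complete:
  assumes R: "locc_round_ok n d Out s L h"
    and u: "u \<in> basis_idx n d" and w: "w \<in> basis_idx n d"
  shows "(\<Sum>oc\<in>Out h. gram (basis_idx n d) (tens n (L h oc)) u w) = op_id u w"
proof -
  let ?s = "s h"
  have s: "?s < n" and fin: "finite (Out h)" using R by (auto simp: locc_round_ok_def)
  have uj: "u j < d j" "w j < d j" if "j < n" for j using u w that by (auto simp: basis_idx_def)
  let ?g = "\<lambda>oc j. \<Sum>c<d j. cnj (L h oc j c (u j)) * L h oc j c (w j)"
  have gj: "?g oc j = lid (u j) (w j)" if "oc \<in> Out h" "j < n" "j \<noteq> ?s" for oc j
    using R that uj[OF that(2)] unfolding locc_round_ok_def loc_unitary_def lid_def by auto
  have "(\<Sum>oc\<in>Out h. gram (basis_idx n d) (tens n (L h oc)) u w)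
      = (\<Sum>oc\<in>Out h. ?g oc ?s * (\<Prod>j\<in>{..<n} - {?s}. lid (u j) (w j)))"
  proof (intro sum.cong refl)
    fix oc assume oc: "oc \<in> Out h"
    have "gram (basis_idx n d) (tens n (L h oc)) u w = ?g oc ?s * (\<Prod>j\<in>{..<n} - {?s}. ?g oc j)"
      unfolding gram_tens using s by (subst prod.remove[of _ ?s]) auto
    also have "\<dots> = ?g oc ?s * (\<Prod>j\<in>{..<n} - {?s}. lid (u j) (w j))"
      using gj[OF oc] by (intro arg_cong2[where f="(*)"] prod.cong refl) auto
    finally show "gram (basis_idx n d) (tens n (L h oc)) u w = ?g oc ?s * (\<Prod>j\<in>{..<n} - {?s}. lid (u j) (w j))" .
  qed
  also have "\<dots> = (\<Sum>oc\<in>Out h. ?g oc ?s) * (\<Prod>j\<in>{..<n} - {?s}. lid (u j) (w j))"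
    by (simp add: sum_distrib_right)
  also have "(\<Sum>oc\<in>Out h. ?g oc ?s) = lid (u ?s) (w ?s)"
    using R uj[OF s] unfolding locc_round_ok_def lid_def by auto
  also have "lid (u ?s) (w ?s) * (\<Prod>j\<in>{..<n} - {?s}. lid (u j) (w j)) = tens n (\<lambda>_. lid) u w"
    unfolding tens_def using s by (subst (2) prod.remove[of _ ?s]) auto
  also have "\<dots> = op_id u w" using u w by (rule tens_lid)
  finally show ?thesis .
qed

definition ext_h :: "(nat list \<Rightarrow> nat set) \<Rightarrow> nat list \<Rightarrow> nat \<Rightarrow> nat list set" where
  "ext_h Out g m = {h \<in> histories Out m. take (length g) h = g}"

lemma ext_Suc:
  assumes lg: "length g \<le> m"
  shows "ext_h Out g (Suc m) = (\<lambda>(h,oc). h @ [oc]) ` Sigma (ext_h Out g m) Out"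
proof (rule equalityI)
  show "ext_h Out g (Suc m) \<subseteq> (\<lambda>(h,oc). h @ [oc]) ` Sigma (ext_h Out g m) Out"
  proof (rule subsetI)
    fix x assume x: "x \<in> ext_h Out g (Suc m)"
    then have "x \<in> (\<lambda>(h,oc). h @ [oc]) ` Sigma (histories Out m) Out"
      unfolding ext_h_def hist_Suc[symmetric] by simp
    then obtain h oc where e: "x = h @ [oc]" and h: "h \<in> histories Out m" and oc: "oc \<in> Out h" by auto
    have "length h = m" using h by (simp add: histories_def)
    then have "take (length g) x = take (length g) h" using e lg by simp
    then have "h \<in> ext_h Out g m" using x h unfolding ext_h_def by simp
    then show "x \<in> (\<lambda>(h,oc). h @ [oc]) ` Sigma (ext_h Out g m) Out" using e oc by auto
  qed
next
  show "(\<lambda>(h,oc). h @ [oc]) ` Sigma (ext_h Out g m) Out \<subseteq> ext_h Out g (Suc m)"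
  proof (rule subsetI)
    fix x assume "x \<in> (\<lambda>(h,oc). h @ [oc]) ` Sigma (ext_h Out g m) Out"
    then obtain h oc where e: "x = h @ [oc]" and h: "h \<in> ext_h Out g m" and oc: "oc \<in> Out h" by auto
    have hh: "h \<in> histories Out m" using h by (simp add: ext_h_def)
    have "length h = m" using hh by (simp add: histories_def)
    then have "take (length g) x = g" using e lg h by (simp add: ext_h_def)
    moreover have "x \<in> histories Out (Suc m)" unfolding hist_Suc using e hh oc by auto
    ultimately show "x \<in> ext_h Out g (Suc m)" by (simp add: ext_h_def)
  qed
qed

lemma subtree_gram:
  assumes R: "\<forall>k<m. \<forall>h\<in>histories Out k. locc_round_ok n d Out s L h"
    and g: "g \<in> histories Out k"
    and x: "x \<in> basis_idx n d" and y: "y \<in> basis_idx n d"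
  shows "k \<le> m' \<Longrightarrow> m' \<le> m \<Longrightarrow>
    (\<Sum>h\<in>ext_h Out g m'. gram (basis_idx n d) (tens n (lp d L h m')) x y)
      = gram (basis_idx n d) (tens n (lp d L g k)) x y"
proof (induction m')
  case 0
  then have "k = 0" by simp
  then have "g = []" using g by (simp add: hist_0)
  then show ?case using \<open>k = 0\<close> by (simp add: ext_h_def hist_0)
next
  case (Suc m')
  let ?I = "basis_idx n d"
  have lg: "length g = k" using g by (simp add: histories_def)
  show ?case
  proof (cases "k = Suc m'")
    case True
    have "ext_h Out g (Suc m') = {g}"
      using g True unfolding ext_h_def histories_def by auto
    then show ?thesis using True by simp
  next
    case False
    then have km: "k \<le> m'" and mm: "m' < m" using Suc.prems by auto
    have finO: "finite (Out h)" if "h \<in> histories Out m'" for h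
      using R mm that by (auto simp: locc_round_ok_def)
    have finE: "finite (ext_h Out g m')"
      using hist_finite[of m Out] R mm unfolding ext_h_def locc_round_ok_def by auto
    have step: "(\<Sum>oc\<in>Out h. gram ?I (tens n (lp d L (h @ [oc]) (Suc m'))) x' y')
        = gram ?I (tens n (lp d L h m')) x' y'" if h: "h \<in> histories Out m'" and x': "x' \<in> ?I" and y': "y' \<in> ?I" for h x' y'
    proof -
      let ?K = "tens n (lp d L h m')"
      have lh: "length h = m'" using h by (simp add: histories_def)
      have "(\<Sum>oc\<in>Out h. gram ?I (tens n (lp d L (h @ [oc]) (Suc m'))) x' y')
          = (\<Sum>oc\<in>Out h. \<Sum>u\<in>?I. \<Sum>w\<in>?I. cnj (?K u x') * gram ?I (tens n (L h oc)) u w * ?K w y')"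
        by (intro sum.cong refl) (simp only: Kh_snoc[OF lh] gram_comp)
      also have "\<dots> = (\<Sum>u\<in>?I. \<Sum>w\<in>?I. \<Sum>oc\<in>Out h. cnj (?K u x') * gram ?I (tens n (L h oc)) u w * ?K w y')"
        by (subst sum.swap, intro sum.cong refl, subst sum.swap, rule refl)
      also have "\<dots> = (\<Sum>u\<in>?I. \<Sum>w\<in>?I. cnj (?K u x') * op_id u w * ?K w y')"
      proof (intro sum.cong refl)
        fix u w assume "u \<in> ?I" "w \<in> ?I"
        then show "(\<Sum>oc\<in>Out h. cnj (?K u x') * gram ?I (tens n (L h oc)) u w * ?K w y') = cnj (?K u x') * op_id u w * ?K w y'"
          using round_complete[of n d Out s L h u w] R mm h
          by (simp add: sum_distrib_left[symmetric] sum_distrib_right[symmetric])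
      qed
      also have "\<dots> = gram ?I ?K x' y'"
        unfolding gram_def
      proof (intro sum.cong refl)
        fix u assume u: "u \<in> ?I"
        have "(\<Sum>w\<in>?I. cnj (?K u x') * op_id u w * ?K w y') = (\<Sum>w\<in>?I. if u = w then cnj (?K u x') * ?K w y' else 0)"
          by (intro sum.cong refl) (simp add: op_id_def)
        also have "\<dots> = cnj (?K u x') * ?K u y'" by (simp add: sum.delta finite_basis u)
        finally show "(\<Sum>w\<in>?I. cnj (?K u x') * op_id u w * ?K w y') = cnj (?K u x') * ?K u y'" .
      qed
      finally show ?thesis .
    qed
    have "(\<Sum>h\<in>ext_h Out g (Suc m'). gram ?I (tens n (lp d L h (Suc m'))) x y)
        = (\<Sum>(h,oc)\<in>Sigma (ext_h Out g m') Out. gram ?I (tens n (lp d L (h @ [oc]) (Suc m'))) x y)"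
      unfolding ext_Suc[OF km[folded lg]] by (subst sum.reindex[OF snoc_inj]) (simp add: case_prod_beta)
    also have "\<dots> = (\<Sum>h\<in>ext_h Out g m'. \<Sum>oc\<in>Out h. gram ?I (tens n (lp d L (h @ [oc]) (Suc m'))) x y)"
      using finE finO by (subst sum.Sigma) (auto simp: ext_h_def)
    also have "\<dots> = (\<Sum>h\<in>ext_h Out g m'. gram ?I (tens n (lp d L h m')) x y)"
    proof (intro sum.cong refl)
      fix h assume "h \<in> ext_h Out g m'"
      then have "h \<in> histories Out m'" by (simp add: ext_h_def)
      then show "(\<Sum>oc\<in>Out h. gram ?I (tens n (lp d L (h @ [oc]) (Suc m'))) x y) = gram ?I (tens n (lp d L h m')) x y"
        by (rule step[OF _ x y])
    qed
    also have "\<dots> = gram ?I (tens n (lp d L g k)) x y"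
      using Suc.IH km mm by simp
    finally show ?thesis .
  qed
qed

definition nsq :: "idx set \<Rightarrow> (idx \<Rightarrow> complex) \<Rightarrow> complex" where
  "nsq I v = (\<Sum>x\<in>I. cnj (v x) * v x)"

lemma nsq_app: "nsq I (app I K v) = (\<Sum>x\<in>I. \<Sum>y\<in>I. cnj (v x) * gram I K x y * v y)"
proof -
  have "nsq I (app I K v) = (\<Sum>z\<in>I. \<Sum>x\<in>I. \<Sum>y\<in>I. cnj (v x) * (cnj (K z x) * K z y) * v y)"
  proof -
    have "nsq I (app I K v) = (\<Sum>z\<in>I. \<Sum>x\<in>I. \<Sum>y\<in>I. cnj (K z x * v x) * (K z y * v y))"
      unfolding nsq_def app_def by (simp only: cnj_sum sum_product)
    also have "\<dots> = (\<Sum>z\<in>I. \<Sum>x\<in>I. \<Sum>y\<in>I. cnj (v x) * (cnj (K z x) * K z y) * v y)"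
      by (intro sum.cong refl) (simp add: mult_ac)
    finally show ?thesis .
  qed
  also have "\<dots> = (\<Sum>x\<in>I. \<Sum>z\<in>I. \<Sum>y\<in>I. cnj (v x) * (cnj (K z x) * K z y) * v y)"
    by (rule sum.swap)
  also have "\<dots> = (\<Sum>x\<in>I. \<Sum>y\<in>I. \<Sum>z\<in>I. cnj (v x) * (cnj (K z x) * K z y) * v y)"
    by (intro sum.cong refl sum.swap)
  also have "\<dots> = (\<Sum>x\<in>I. \<Sum>y\<in>I. cnj (v x) * gram I K x y * v y)"
    unfolding gram_def by (simp add: sum_distrib_left sum_distrib_right)
  finally show ?thesis .
qed

lemma nsq_nonzero:
  assumes "finite I" "x \<in> I" "v x \<noteq> 0"
  shows "nsq I v \<noteq> 0"
proof -
  have n1: "nsq I v = of_real (\<Sum>x\<in>I. (cmod (v x))\<^sup>2)"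
    unfolding nsq_def of_real_sum by (intro sum.cong refl) (metis complex_norm_square mult.commute)
  have n2: "(\<Sum>x\<in>I. (cmod (v x))\<^sup>2) > 0"
  proof -
    have "(cmod (v x))\<^sup>2 \<le> (\<Sum>x\<in>I. (cmod (v x))\<^sup>2)"
      using assms by (intro member_le_sum) auto
    moreover have "(cmod (v x))\<^sup>2 > 0" using assms by simp
    ultimately show ?thesis by linarith
  qed
  show ?thesis using n1 n2 by (metis less_irrefl of_real_eq_0_iff)
qed


lemma kraus_dens:
  assumes x: "x \<in> I" and y: "y \<in> I"
  shows "kraus_apply I K S (dens I \<psi>) x y = (\<Sum>k\<in>S. app I (K k) \<psi> x * cnj (app I (K k) \<psi> y))"
proof -
  have "kraus_apply I K S (dens I \<psi>) x y = (\<Sum>k\<in>S. \<Sum>z\<in>I. \<Sum>w\<in>I. K k x z * dens I \<psi> z w * cnj (K k y w))"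
    using x y by (simp add: kraus_apply_def)
  also have "\<dots> = (\<Sum>k\<in>S. \<Sum>z\<in>I. \<Sum>w\<in>I. K k x z * \<psi> z * cnj (K k y w * \<psi> w))"
    by (intro sum.cong refl) (simp add: dens_def mult_ac)
  also have "\<dots> = (\<Sum>k\<in>S. app I (K k) \<psi> x * cnj (app I (K k) \<psi> y))"
    unfolding app_def by (simp only: cnj_sum sum_product)
  finally show ?thesis .
qed

lemma prop_lemma:
  fixes a :: "'k \<Rightarrow> idx \<Rightarrow> complex"
  assumes fin: "finite S"
    and eq: "\<forall>x\<in>I. \<forall>y\<in>I. (\<Sum>k\<in>S. a k x * cnj (a k y)) = \<phi> x * cnj (\<phi> y)"
    and k: "k \<in> S" and x: "x \<in> I" and y: "y \<in> I"
  shows "a k x * \<phi> y = a k y * \<phi> x"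
proof -
  define e where "e = (\<lambda>k. a k x * \<phi> y - a k y * \<phi> x)"
  have pt: "e k * cnj (e k) = (a k x * cnj (a k x)) * (\<phi> y * cnj (\<phi> y)) - (a k x * cnj (a k y)) * (\<phi> y * cnj (\<phi> x))
       - (a k y * cnj (a k x)) * (\<phi> x * cnj (\<phi> y)) + (a k y * cnj (a k y)) * (\<phi> x * cnj (\<phi> x))" for k
    unfolding e_def by (simp add: algebra_simps)
  have "(\<Sum>k\<in>S. e k * cnj (e k)) = (\<Sum>k\<in>S. a k x * cnj (a k x)) * (\<phi> y * cnj (\<phi> y)) - (\<Sum>k\<in>S. a k x * cnj (a k y)) * (\<phi> y * cnj (\<phi> x))
       - (\<Sum>k\<in>S. a k y * cnj (a k x)) * (\<phi> x * cnj (\<phi> y)) + (\<Sum>k\<in>S. a k y * cnj (a k y)) * (\<phi> x * cnj (\<phi> x))"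
    unfolding pt by (simp add: sum.distrib sum_subtractf sum_distrib_right)
  also have "\<dots> = 0" using eq x y by (simp add: algebra_simps)
  finally have s0: "(\<Sum>k\<in>S. e k * cnj (e k)) = 0" .
  have "(\<Sum>k\<in>S. e k * cnj (e k)) = of_real (\<Sum>k\<in>S. (cmod (e k))\<^sup>2)"
    unfolding of_real_sum by (intro sum.cong refl) (metis complex_norm_square)
  then have "(\<Sum>k\<in>S. (cmod (e k))\<^sup>2) = 0" using s0 by (metis of_real_eq_0_iff)
  then have "(cmod (e k))\<^sup>2 = 0" using fin k by (subst (asm) sum_nonneg_eq_0_iff) auto
  then show ?thesis by (simp add: e_def)
qed

theorem lemma1:
  fixes n :: nat and d :: "nat \<Rightarrow> nat" and \<psi> \<phi> :: "idx \<Rightarrow> complex" and \<Lambda> :: "op \<Rightarrow> op"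
  assumes dpos: "\<forall>j<n. 0 < d j"
    and psi: "pure_state (basis_idx n d) \<psi>" "fully_entangled n d \<psi>"
    and phi: "pure_state (basis_idx n d) \<phi>" "fully_entangled n d \<phi>"
    and L: "\<Lambda> \<in> LOCC_N n d"
    and trans: "\<Lambda> (dens (basis_idx n d) \<psi>) = dens (basis_idx n d) \<phi>"
  shows "\<exists>\<Lambda>' \<in> SEP1 n d. \<Lambda>' (dens (basis_idx n d) \<psi>) = dens (basis_idx n d) \<phi>"
proof -
  let ?I = "basis_idx n d"
  obtain m Out sel LL where R: "\<forall>k<m. \<forall>h\<in>histories Out k. locc_round_ok n d Out sel LL h"
    and Ldef: "\<Lambda> = kraus_apply ?I (\<lambda>h. locc_kraus n ?I LL h m) (histories Out m)"
    using L unfolding LOCC_N_def by blast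
  define a where "a = (\<lambda>h. app ?I (tens n (lp d LL h m)) \<psi>)"
  have finH: "finite (histories Out m)"
    using hist_finite[of m Out m] R by (auto simp: locc_round_ok_def)
  have A1: "\<forall>x\<in>?I. \<forall>y\<in>?I. (\<Sum>h\<in>histories Out m. a h x * cnj (a h y)) = \<phi> x * cnj (\<phi> y)"
  proof (intro ballI)
    fix x y assume x: "x \<in> ?I" and y: "y \<in> ?I"
    have ax: "app ?I (locc_kraus n ?I LL h m) \<psi> x = a h x" if "x \<in> ?I" for h x
      unfolding a_def using that by (intro app_cong_op) (simp add: locc_tens)
    have "\<phi> x * cnj (\<phi> y) = dens ?I \<phi> x y" using x y by (simp add: dens_def)
    also have "\<dots> = \<Lambda> (dens ?I \<psi>) x y" using trans by simp
    also have "\<dots> = (\<Sum>h\<in>histories Out m. a h x * cnj (a h y))"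
      unfolding Ldef kraus_dens[OF x y] using ax x y by simp
    finally show "(\<Sum>h\<in>histories Out m. a h x * cnj (a h y)) = \<phi> x * cnj (\<phi> y)" by simp
  qed
  have nz: "\<exists>x\<in>?I. v x \<noteq> 0" if "pure_state ?I v" for v
  proof (rule ccontr)
    assume "\<not> ?thesis"
    then have "(\<Sum>x\<in>?I. (cmod (v x))\<^sup>2) = 0" by simp
    then show False using that by (simp add: pure_state_def)
  qed
  obtain x0 where x0: "x0 \<in> ?I" "\<phi> x0 \<noteq> 0" using nz[OF phi(1)] by blast
  have aprop: "a h x = (a h x0 / \<phi> x0) * \<phi> x" if "h \<in> histories Out m" "x \<in> ?I" for h x
  proof -
    have "a h x * \<phi> x0 = a h x0 * \<phi> x" by (rule prop_lemma[OF finH A1 that x0(1)])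
    then show ?thesis using x0(2) by (simp add: field_simps)
  qed
  have Fphi: "Full n d j \<phi>" if "j < n" for j
    using full_from_rank[OF that] phi(2) that by (simp add: fully_entangled_def)
  have nonzero_case: "\<forall>x\<in>?I. app ?I (tens n B) \<chi> x = c * \<phi> x \<Longrightarrow> (\<exists>x\<in>?I. app ?I (tens n B) \<chi> x \<noteq> 0)
      \<Longrightarrow> \<forall>j<n. loc_invertible (d j) (B j) \<and> Full n d j \<chi>" for B \<chi> c
  proof -
    assume e: "\<forall>x\<in>?I. app ?I (tens n B) \<chi> x = c * \<phi> x" and ne: "\<exists>x\<in>?I. app ?I (tens n B) \<chi> x \<noteq> 0"
    have "c \<noteq> 0" using e ne by auto
    then show ?thesis using inv_full[OF _ _ Fphi e] by blast
  qed
  have inv: "\<forall>j<n. loc_invertible (d j) (lp d LL h m j)"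
    if h: "h \<in> histories Out m" and ne: "\<exists>x\<in>?I. a h x \<noteq> 0" for h
    using nonzero_case[of "lp d LL h m" \<psi> "a h x0 / \<phi> x0"] aprop[OF h] ne unfolding a_def by blast
  have zero_case: "\<forall>x\<in>?I. \<forall>y\<in>?I. tens n (lp d LL h m) x y = 0"
    if h: "h \<in> histories Out m" and z: "\<forall>x\<in>?I. a h x = 0" for h
  proof -
    define Z where "Z = (\<lambda>k. \<forall>x\<in>?I. app ?I (tens n (lp d LL h k)) \<psi> x = 0)"
    have Zm: "Z m" using z unfolding Z_def a_def by simp
    have nZ0: "\<not> Z 0"
    proof
      assume "Z 0"
      obtain x1 where "x1 \<in> ?I" "\<psi> x1 \<noteq> 0" using nz[OF psi(1)] by blast
      then show False using \<open>Z 0\<close> unfolding Z_def by (simp add: app_tens_lid)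
    qed
    define k1 where "k1 = (LEAST k. Z k)"
    have Zk1: "Z k1" unfolding k1_def using Zm by (rule LeastI)
    have k1m: "k1 \<le> m" unfolding k1_def using Zm by (rule Least_le)
    have "k1 \<noteq> 0"
    proof
      assume "k1 = 0"
      then show False using Zk1 nZ0 by simp
    qed
    then obtain k where k1: "k1 = Suc k" using not0_implies_Suc by blast
    have nZk: "\<not> Z k" using not_less_Least[of k Z] k1 unfolding k1_def by simp
    have km: "k < m" using k1m k1 by simp
    define \<chi> where "\<chi> = app ?I (tens n (lp d LL h k)) \<psi>"
    obtain x1 where x1: "x1 \<in> ?I" "\<chi> x1 \<noteq> 0" using nZk unfolding Z_def \<chi>_def by blast
    define g where "g = take k h"
    have g: "g \<in> histories Out k" unfolding g_def using take_hist[OF h] km by simp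
    have lg: "length g = k" using g by (simp add: histories_def)
    have lpg: "lp d LL g k = lp d LL h k" unfolding g_def by (rule lp_take[symmetric])
    have sub: "(\<Sum>h'\<in>ext_h Out g m. gram ?I (tens n (lp d LL h' m)) x y) = gram ?I (tens n (lp d LL h k)) x y"
      if "x \<in> ?I" "y \<in> ?I" for x y
      using subtree_gram[OF R g that, of m] km lpg by simp
    have finE: "finite (ext_h Out g m)" using finH by (simp add: ext_h_def)
    have "(\<Sum>h'\<in>ext_h Out g m. nsq ?I (a h')) = nsq ?I \<chi>"
    proof -
      have "(\<Sum>h'\<in>ext_h Out g m. nsq ?I (a h'))
          = (\<Sum>h'\<in>ext_h Out g m. \<Sum>x\<in>?I. \<Sum>y\<in>?I. cnj (\<psi> x) * gram ?I (tens n (lp d LL h' m)) x y * \<psi> y)"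
        unfolding a_def nsq_app by simp
      also have "\<dots> = (\<Sum>x\<in>?I. \<Sum>y\<in>?I. \<Sum>h'\<in>ext_h Out g m. cnj (\<psi> x) * gram ?I (tens n (lp d LL h' m)) x y * \<psi> y)"
        by (subst sum.swap, intro sum.cong refl, subst sum.swap, rule refl)
      also have "\<dots> = (\<Sum>x\<in>?I. \<Sum>y\<in>?I. cnj (\<psi> x) * gram ?I (tens n (lp d LL h k)) x y * \<psi> y)"
        by (intro sum.cong refl) (simp add: sum_distrib_left[symmetric] sum_distrib_right[symmetric] sub)
      also have "\<dots> = nsq ?I \<chi>" unfolding \<chi>_def nsq_app by simp
      finally show ?thesis .
    qed
    also have "\<dots> \<noteq> 0" by (rule nsq_nonzero[of ?I x1 \<chi>]) (use x1 finite_basis in auto)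
    finally obtain h' where h': "h' \<in> ext_h Out g m" "nsq ?I (a h') \<noteq> 0"
      by (metis (no_types, lifting) sum.neutral)
    have h'H: "h' \<in> histories Out m" and th': "take k h' = take k h"
      using h'(1) lg unfolding ext_h_def g_def by auto
    have "\<exists>x\<in>?I. a h' x \<noteq> 0"
    proof (rule ccontr)
      assume "\<not> ?thesis"
      then have "nsq ?I (a h') = 0" unfolding nsq_def by simp
      then show False using h'(2) by simp
    qed
    have ah': "a h' x = app ?I (tens n (lq d LL h' k m)) \<chi> x" if x: "x \<in> ?I" for x
    proof -
      have "a h' x = app ?I (tens n (\<lambda>j. lmul (d j) (lq d LL h' k m j) (lp d LL h' k j))) \<psi> x"
        unfolding a_def using km x
        by (intro app_cong_op tens_cong) (auto intro: lp_split)
      also have "\<dots> = app ?I (tens n (lq d LL h' k m)) (app ?I (tens n (lp d LL h' k)) \<psi>) x"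
        by (simp only: app_comp[symmetric]) (rule app_cong_op, simp add: tens_comp)
      also have "lp d LL h' k = lp d LL h k" using th' by (rule lp_take_eq)
      finally show ?thesis unfolding \<chi>_def .
    qed
    have Fchi: "\<forall>j<n. Full n d j \<chi>"
      using nonzero_case[of "lq d LL h' k m" \<chi> "a h' x0 / \<phi> x0"] aprop[OF h'H] ah'
        \<open>\<exists>x\<in>?I. a h' x \<noteq> 0\<close> by auto
    define gk where "gk = take k h"
    define oc where "oc = h ! k"
    have Rk: "locc_round_ok n d Out sel LL gk" using R km take_hist[OF h, of k] unfolding gk_def by auto
    have s0: "sel gk < n" using Rk by (simp add: locc_round_ok_def)
    have U: "\<forall>j<n. j \<noteq> sel gk \<longrightarrow> loc_unitary (d j) (LL gk oc j)"
    proof -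
      have "oc \<in> Out gk" using h km unfolding histories_def oc_def gk_def by auto
      then show ?thesis using Rk by (simp add: locc_round_ok_def)
    qed
    have zk: "\<forall>x\<in>?I. app ?I (tens n (LL gk oc)) \<chi> x = 0"
    proof
      fix x assume x: "x \<in> ?I"
      have "app ?I (tens n (LL gk oc)) \<chi> x = app ?I (tens n (lp d LL h (Suc k))) \<psi> x"
        unfolding \<chi>_def gk_def oc_def
        by (simp only: app_comp[symmetric]) (rule app_cong_op, simp add: tens_comp)
      also have "\<dots> = 0" using Zk1 k1 x unfolding Z_def by simp
      finally show "app ?I (tens n (LL gk oc)) \<chi> x = 0" .
    qed
    have Lz: "\<forall>a<d (sel gk). \<forall>b<d (sel gk). LL gk oc (sel gk) a b = 0"
      by (rule round_zero[OF s0 _ U zk]) (use Fchi s0 in auto)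
    have lpS: "lp d LL h (Suc k) (sel gk) a b = 0" if "a < d (sel gk)" for a b
      using Lz that unfolding gk_def oc_def by (simp add: lmul_def)
    have lpm: "lp d LL h m (sel gk) a b = 0" if "a < d (sel gk)" "b < d (sel gk)" for a b
    proof -
      have "lp d LL h m (sel gk) a b = lmul (d (sel gk)) (lq d LL h (Suc k) m (sel gk)) (lp d LL h (Suc k) (sel gk)) a b"
        using lp_split[of "Suc k" m d "sel gk" LL h] km that unfolding leq_def by simp
      also have "\<dots> = 0" unfolding lmul_def using lpS by simp
      finally show ?thesis .
    qed
    show ?thesis
    proof (intro ballI)
      fix x y assume x: "x \<in> ?I" and y: "y \<in> ?I"
      have "x (sel gk) < d (sel gk)" "y (sel gk) < d (sel gk)" using x y s0 by (auto simp: basis_idx_def)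
      then show "tens n (lp d LL h m) x y = 0" unfolding tens_def
        using lpm s0 by (intro prod_zero) (auto intro!: bexI[where x="sel gk"])
    qed
  qed
  define G where "G = {h \<in> histories Out m. \<exists>x\<in>?I. a h x \<noteq> 0}"
  define S where "S = (to_nat :: nat list \<Rightarrow> nat) ` G"
  define A where "A = (\<lambda>k. lp d LL (from_nat k :: nat list) m)"
  have GH: "G \<subseteq> histories Out m" by (auto simp: G_def)
  have finG: "finite G" using finH GH by (rule finite_subset[rotated])
  have injG: "inj_on (to_nat :: nat list \<Rightarrow> nat) G" by (simp add: inj_on_def)
  have sumS: "(\<Sum>k\<in>S. f (tens n (A k))) = (\<Sum>h\<in>G. f (tens n (lp d LL h m)))" for f :: "op \<Rightarrow> complex"
    unfolding S_def by (subst sum.reindex[OF injG]) (simp add: A_def)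
  have offG: "\<forall>x\<in>?I. a h x = 0" if "h \<in> histories Out m - G" for h
    using that by (auto simp: G_def)
  let ?L' = "kraus_apply ?I (\<lambda>k. tens n (A k)) S"
  have inSEP: "?L' \<in> SEP1 n d"
    unfolding SEP1_def
  proof (intro CollectI exI conjI)
    show "finite S" unfolding S_def using finG by simp
    show "\<forall>k\<in>S. \<forall>j<n. loc_invertible (d j) (A k j)"
      unfolding S_def A_def using inv by (auto simp: G_def)
    show "kraus_complete ?I (\<lambda>k. tens n (A k)) S"
      unfolding kraus_complete_def
    proof (intro ballI)
      fix x y assume x: "x \<in> ?I" and y: "y \<in> ?I"
      have "(\<Sum>k\<in>S. \<Sum>z\<in>?I. cnj (tens n (A k) z x) * tens n (A k) z y)
          = (\<Sum>h\<in>G. gram ?I (tens n (lp d LL h m)) x y)"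
        using sumS[of "\<lambda>K. gram ?I K x y"] by (simp add: gram_def)
      also have "\<dots> = (\<Sum>h\<in>histories Out m. gram ?I (tens n (lp d LL h m)) x y)"
      proof (rule sum.mono_neutral_left[OF finH GH], rule ballI)
        fix h assume h: "h \<in> histories Out m - G"
        have "tens n (lp d LL h m) z w = 0" if "z \<in> ?I" "w \<in> ?I" for z w
          using zero_case[of h] h offG[OF h] that by auto
        then show "gram ?I (tens n (lp d LL h m)) x y = 0"
          unfolding gram_def using x y by simp
      qed
      also have "\<dots> = gram ?I (tens n (lp d LL [] 0)) x y"
      proof -
        have "ext_h Out [] m = histories Out m" by (simp add: ext_h_def)
        then show ?thesis using subtree_gram[OF R _ x y, of "[]" 0 m] by (simp add: hist_0)
      qed
      also have "\<dots> = op_id x y"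
      proof -
        have "gram ?I (tens n (lp d LL [] 0)) x y = (\<Sum>z\<in>?I. if z = x then op_id z y else 0)"
          unfolding gram_def using x y by (intro sum.cong refl) (simp add: tens_lid x y op_id_def)
        also have "\<dots> = op_id x y" using x by (simp add: sum.delta' finite_basis)
        finally show ?thesis .
      qed
      finally show "(\<Sum>k\<in>S. \<Sum>z\<in>?I. cnj (tens n (A k) z x) * tens n (A k) z y) = op_id x y" .
    qed
  qed (rule refl)
  have "?L' (dens ?I \<psi>) = dens ?I \<phi>"
  proof (intro ext)
    fix x y
    show "?L' (dens ?I \<psi>) x y = dens ?I \<phi> x y"
    proof (cases "x \<in> ?I \<and> y \<in> ?I")
      case True
      then have x: "x \<in> ?I" and y: "y \<in> ?I" by auto
      have "?L' (dens ?I \<psi>) x y = (\<Sum>h\<in>G. a h x * cnj (a h y))"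
        unfolding kraus_dens[OF x y] using sumS[of "\<lambda>K. app ?I K \<psi> x * cnj (app ?I K \<psi> y)"]
        by (simp add: a_def)
      also have "\<dots> = (\<Sum>h\<in>histories Out m. a h x * cnj (a h y))"
        using offG x by (intro sum.mono_neutral_left[OF finH GH]) auto
      also have "\<dots> = dens ?I \<phi> x y" using A1 x y by (simp add: dens_def)
      finally show ?thesis .
    next
      case False
      then show ?thesis by (auto simp: kraus_apply_def dens_def)
    qed
  qed
  then show ?thesis using inSEP by blast
qed

end
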